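(* Let $\{(G_n,\Psi_n,\varphi^L_n,\varphi^U_n)\}_{n\ge0}$ be an $\mathcal{F}$-system (with $\varphi^U_n>0$) satisfying Condition $\Gamma$, with induced Cantor system $(X,H_X)$ and limit function $\varphi^U$. Define $s:X\to\mathbb{R}$ by $s(x)=\lim_{n\to\infty}s_n(x(n),H_X(x)(n))$. Then $s$ is continuous, $s>0$, and whenever $\varphi^U(x)\ne0$ we have $s(x)=\varphi^U(H_X(x))/\varphi^U(x)$.
   Context: An $\mathcal{F}$-system consists of: finite directed graphs $G_n$ ($n\ge0$), each vertex having at least one outgoing and one incoming edge; surjective maps $\Psi_n:G_{n+1}\to G_n$ sending edges to edges; such that (i) for each $n$ and $v\in G_n$ there are $m>n$ and distinct $v',v''\in G_{m+1}$ with $\Psi_n\circ\cdots\circ\Psi_m(v')=\Psi_n\circ\cdots\circ\Psi_m(v'')=v$; (ii) for every $m$ there is $n>m$ such that for every $g\in G_n$ the set $\{\Psi_m\circ\cdots\circ\Psi_{n-1}(g'):\overrightarrow{gg'}\in G_n\}$ has exactly one element; and maps $\varphi^L_n,\varphi^U_n:G_n\to[0,1]$ with $\varphi^L_n\le\varphi^U_n$, $\varphi^U_{n+1}(v')\le\varphi^U_n(\Psi_n(v'))$, $\varphi^L_{n+1}(v')\ge\varphi^L_n(\Psi_n(v'))$, and such that for every $g\in G_n$ there is $g'\in G_{n+1}$ with $\Psi_n(g')=g$, $\varphi^L_{n+1}(g')=\varphi^L_n(g)$, $\varphi^U_{n+1}(g')=\varphi^U_n(g)$. $X=\{x\in\prod_n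 G_n: x(n)=\Psi_n(x(n+1))\ \forall n\}$ (a Cantor space) and $H_X:X\to X$ is the continuous surjection whose graph is $\{(x,y)\in X^2:\overrightarrow{x(n)y(n)}\in G_n\ \forall n\}$. $\varphi^U(x)=\lim_n\varphi^U_n(x(n))$. For $u,v\in G_n$, $s_n(u,v)=\varphi^U_n(v)/\varphi^U_n(u)$. For an edge $\overrightarrow{uv}\in G_n$, $\Gamma_n(\overrightarrow{uv})=\max\{|s_n(v,u)-s_{n+1}(v',u')|,|s_n(u,v)-s_{n+1}(u',v')| : \overrightarrow{u'v'}\in G_{n+1},\Psi_n(u')=u,\Psi_n(v')=v\}$, $\Gamma_n=\max_{\overrightarrow{uv}}\Gamma_n(\overrightarrow{uv})$; Condition $\Gamma$ means $\sum_n\Gamma_n<1$. *)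

theory Defs
  imports "HOL-Analysis.Analysis"
begin

fun proj :: "(nat \<Rightarrow> 'v \<Rightarrow> 'v) \<Rightarrow> nat \<Rightarrow> nat \<Rightarrow> 'v \<Rightarrow> 'v" where
  "proj Psi m 0 v = v"
| "proj Psi m (Suc k) v = proj Psi m k (Psi (m + k) v)"

definition F_system ::
  "(nat \<Rightarrow> 'v set) \<Rightarrow> (nat \<Rightarrow> ('v \<times> 'v) set) \<Rightarrow> (nat \<Rightarrow> 'v \<Rightarrow> 'v)
   \<Rightarrow> (nat \<Rightarrow> 'v \<Rightarrow> real) \<Rightarrow> (nat \<Rightarrow> 'v \<Rightarrow> real) \<Rightarrow> bool" where
  "F_system V E Psi phiL phiU \<longleftrightarrow>
     (\<forall>n. finite (V n) \<and> E n \<subseteq> V n \<times> V n) \<and>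
     (\<forall>n. \<forall>v\<in>V n. (\<exists>w. (v, w) \<in> E n) \<and> (\<exists>w. (w, v) \<in> E n)) \<and>
     (\<forall>n. Psi n ` V (Suc n) = V n) \<and>
     (\<forall>n u v. (u, v) \<in> E (Suc n) \<longrightarrow> (Psi n u, Psi n v) \<in> E n) \<and>
     \<comment> \<open>condition (i)\<close>
     (\<forall>n. \<forall>v\<in>V n. \<exists>m>n. \<exists>v'\<in>V (Suc m). \<exists>v''\<in>V (Suc m). v' \<noteq> v'' \<and>
          proj Psi n (Suc m - n) v' = v \<and> proj Psi n (Suc m - n) v'' = v) \<and>
     \<comment> \<open>condition (ii)\<close>
     (\<forall>m. \<exists>n>m. \<forall>g\<in>V n. card {proj Psi m (n - m) g' | g'. (g, g') \<in> E n} = 1) \<and>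
     \<comment> \<open>conditions on phiL, phiU\<close>
     (\<forall>n. \<forall>v\<in>V n. 0 \<le> phiL n v \<and> phiL n v \<le> phiU n v \<and> phiU n v \<le> 1) \<and>
     (\<forall>n. \<forall>v'\<in>V (Suc n). phiU (Suc n) v' \<le> phiU n (Psi n v') \<and>
                         phiL (Suc n) v' \<ge> phiL n (Psi n v')) \<and>
     (\<forall>n. \<forall>g\<in>V n. \<exists>g'\<in>V (Suc n). Psi n g' = g \<and>
          phiL (Suc n) g' = phiL n g \<and> phiU (Suc n) g' = phiU n g)"

definition FX :: "(nat \<Rightarrow> 'v set) \<Rightarrow> (nat \<Rightarrow> 'v \<Rightarrow> 'v) \<Rightarrow> (nat \<Rightarrow> 'v) set" where
  "FX V Psi = {x. \<forall>n. x n \<in> V n \<and> x n = Psi n (x (Suc n))}"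

definition FX_top :: "(nat \<Rightarrow> 'v set) \<Rightarrow> (nat \<Rightarrow> 'v \<Rightarrow> 'v) \<Rightarrow> (nat \<Rightarrow> 'v) topology" where
  "FX_top V Psi = subtopology (product_topology (\<lambda>n. discrete_topology (V n)) UNIV) (FX V Psi)"

definition HX :: "(nat \<Rightarrow> 'v set) \<Rightarrow> (nat \<Rightarrow> ('v \<times> 'v) set) \<Rightarrow> (nat \<Rightarrow> 'v \<Rightarrow> 'v)
   \<Rightarrow> (nat \<Rightarrow> 'v) \<Rightarrow> (nat \<Rightarrow> 'v)" where
  "HX V E Psi x = (THE y. y \<in> FX V Psi \<and> (\<forall>n. (x n, y n) \<in> E n))"

definition phiU_lim :: "(nat \<Rightarrow> 'v \<Rightarrow> real) \<Rightarrow> (nat \<Rightarrow> 'v) \<Rightarrow> real" where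
  "phiU_lim phiU x = lim (\<lambda>n. phiU n (x n))"

definition s_n :: "(nat \<Rightarrow> 'v \<Rightarrow> real) \<Rightarrow> nat \<Rightarrow> 'v \<Rightarrow> 'v \<Rightarrow> real" where
  "s_n phiU n u v = phiU n v / phiU n u"

text \<open>Gamma_n(uv) for an edge uv of G_n; the max over an empty set is read as 0
  (adding 0 does not change the max of absolute values otherwise).\<close>
definition Gamma_edge ::
  "(nat \<Rightarrow> ('v \<times> 'v) set) \<Rightarrow> (nat \<Rightarrow> 'v \<Rightarrow> 'v) \<Rightarrow> (nat \<Rightarrow> 'v \<Rightarrow> real) \<Rightarrow> nat \<Rightarrow> 'v \<Rightarrow> 'v \<Rightarrow> real" where
  "Gamma_edge E Psi phiU n u v = Max (insert 0
     ({\<bar>s_n phiU n v u - s_n phiU (Suc n) v' u'\<bar> | u' v'.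
         (u', v') \<in> E (Suc n) \<and> Psi n u' = u \<and> Psi n v' = v} \<union>
      {\<bar>s_n phiU n u v - s_n phiU (Suc n) u' v'\<bar> | u' v'.
         (u', v') \<in> E (Suc n) \<and> Psi n u' = u \<and> Psi n v' = v}))"

definition Gamma ::
  "(nat \<Rightarrow> ('v \<times> 'v) set) \<Rightarrow> (nat \<Rightarrow> 'v \<Rightarrow> 'v) \<Rightarrow> (nat \<Rightarrow> 'v \<Rightarrow> real) \<Rightarrow> nat \<Rightarrow> real" where
  "Gamma E Psi phiU n = Max (insert 0 {Gamma_edge E Psi phiU n u v | u v. (u, v) \<in> E n})"

definition Condition_Gamma ::
  "(nat \<Rightarrow> ('v \<times> 'v) set) \<Rightarrow> (nat \<Rightarrow> 'v \<Rightarrow> 'v) \<Rightarrow> (nat \<Rightarrow> 'v \<Rightarrow> real) \<Rightarrow> bool" where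
  "Condition_Gamma E Psi phiU \<longleftrightarrow> summable (Gamma E Psi phiU) \<and> suminf (Gamma E Psi phiU) < 1"

end

theory Submission
  imports Defs
begin


context fixes V E Psi phiL phiU assumes F: "F_system V E Psi phiL phiU" begin
lemma F_fin: "\<forall>n. finite (V n) \<and> E n \<subseteq> V n \<times> V n"
  using F unfolding F_system_def by (elim conjE) assumption
lemma F_succ: "\<forall>n. \<forall>v\<in>V n. (\<exists>w. (v, w) \<in> E n) \<and> (\<exists>w. (w, v) \<in> E n)"
  using F unfolding F_system_def by (elim conjE) assumption
lemma F_surj: "\<forall>n. Psi n ` V (Suc n) = V n"
  using F unfolding F_system_def by (elim conjE) assumption
lemma F_edge: "\<forall>n u v. (u, v) \<in> E (Suc n) \<longrightarrow> (Psi n u, Psi n v) \<in> E n"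
  using F unfolding F_system_def by (elim conjE) assumption
lemma F_ii: "\<forall>m. \<exists>n>m. \<forall>g\<in>V n. card {proj Psi m (n - m) g' | g'. (g, g') \<in> E n} = 1"
  using F unfolding F_system_def by (elim conjE) assumption
lemma F_mono: "\<forall>n. \<forall>v'\<in>V (Suc n). phiU (Suc n) v' \<le> phiU n (Psi n v') \<and>
                         phiL (Suc n) v' \<ge> phiL n (Psi n v')"
  using F unfolding F_system_def by (elim conjE) assumption
end

lemma proj_add: "proj Psi m (a + b) w = proj Psi m a (proj Psi (m + a) b w)"
proof (induction b arbitrary: w)
  case 0
  then show ?case by simp
next
  case (Suc b)
  have "proj Psi m (a + Suc b) w = proj Psi m (a + b) (Psi (m + (a + b)) w)"
    by simp
  also have "\<dots> = proj Psi m a (proj Psi (m + a) b (Psi (m + (a + b)) w))"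
    by (rule Suc.IH)
  also have "\<dots> = proj Psi m a (proj Psi (m + a) (Suc b) w)"
    by (simp add: add.assoc)
  finally show ?case .
qed

lemma proj_FX:
  assumes x: "x \<in> FX V Psi" shows "proj Psi m k (x (m + k)) = x m"
proof (induction k)
  case 0
  then show ?case by simp
next
  case (Suc k)
  have c: "Psi (m + k) (x (Suc (m + k))) = x (m + k)" using x unfolding FX_def by (metis (mono_tags, lifting) mem_Collect_eq)
  have "proj Psi m (Suc k) (x (m + Suc k)) = proj Psi m k (Psi (m + k) (x (Suc (m + k))))"
    by simp
  also have "\<dots> = x m" using c Suc.IH by simp
  finally show ?case .
qed

lemma proj_FX': "x \<in> FX V Psi \<Longrightarrow> m \<le> n \<Longrightarrow> proj Psi m (n - m) (x n) = x m"
  using proj_FX[of x V Psi m "n - m"] by simp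

lemma proj_V: "F_system V E Psi phiL phiU \<Longrightarrow> w \<in> V (m + k) \<Longrightarrow> proj Psi m k w \<in> V m"
proof (induction k arbitrary: w)
  case 0
  then show ?case by simp
next
  case (Suc k)
  have s: "Psi (m + k) ` V (Suc (m + k)) = V (m + k)"
    using Suc.prems(1) unfolding F_system_def by (elim conjE) blast
  have "w \<in> V (Suc (m + k))" using Suc.prems(2) by simp
  hence "Psi (m + k) w \<in> V (m + k)" using s by blast
  then show ?case using Suc.IH[OF Suc.prems(1)] by simp
qed

lemma proj_E: "F_system V E Psi phiL phiU \<Longrightarrow> (u, w) \<in> E (m + k) \<Longrightarrow> (proj Psi m k u, proj Psi m k w) \<in> E m"
proof (induction k arbitrary: u w)
  case 0
  then show ?case by simp
next
  case (Suc k)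
  have s: "\<forall>n u v. (u, v) \<in> E (Suc n) \<longrightarrow> (Psi n u, Psi n v) \<in> E n"
    using Suc.prems(1) unfolding F_system_def by (elim conjE) assumption
  have "(u, w) \<in> E (Suc (m + k))" using Suc.prems(2) by simp
  hence "(Psi (m + k) u, Psi (m + k) w) \<in> E (m + k)" using s by blast
  then show ?case using Suc.IH[OF Suc.prems(1)] by simp
qed

lemma card1_eq: "card A = 1 \<Longrightarrow> a \<in> A \<Longrightarrow> b \<in> A \<Longrightarrow> a = b"
  by (metis card_1_singletonE singletonD)



lemma HX_unique:
  assumes F: "F_system V E Psi phiL phiU" and y: "y \<in> FX V Psi" and y': "y' \<in> FX V Psi"
    and m: "m < n" and c: "card {proj Psi m (n - m) g' | g'. (g, g') \<in> E n} = 1"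
    and e: "(g, y n) \<in> E n" and e': "(g, y' n) \<in> E n"
  shows "y m = y' m"
proof -
  have "proj Psi m (n - m) (y n) \<in> {proj Psi m (n - m) g' | g'. (g, g') \<in> E n}"
    using e by blast
  hence "y m \<in> {proj Psi m (n - m) g' | g'. (g, g') \<in> E n}"
    using proj_FX'[OF y, of m n] m by simp
  moreover have "proj Psi m (n - m) (y' n) \<in> {proj Psi m (n - m) g' | g'. (g, g') \<in> E n}"
    using e' by blast
  hence "y' m \<in> {proj Psi m (n - m) g' | g'. (g, g') \<in> E n}"
    using proj_FX'[OF y', of m n] m by simp
  ultimately show ?thesis using card1_eq[OF c] by blast
qed



lemma HX_exists:
  assumes F: "F_system V E Psi phiL phiU" and x: "x \<in> FX V Psi"
  shows "\<exists>y. y \<in> FX V Psi \<and> (\<forall>n. (x n, y n) \<in> E n)"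
proof -
  have ii: "\<forall>m. \<exists>n>m. \<forall>g\<in>V n. card {proj Psi m (n - m) g' | g'. (g, g') \<in> E n} = 1"
    using F_ii[OF F] .
  obtain N where N0: "\<forall>m. N m > m \<and> (\<forall>g\<in>V (N m). card {proj Psi m (N m - m) g' | g'. (g, g') \<in> E (N m)} = 1)"
    using choice[OF ii] by blast
  hence N: "\<And>m. N m > m" "\<And>m. \<forall>g\<in>V (N m). card {proj Psi m (N m - m) g' | g'. (g, g') \<in> E (N m)} = 1"
    by auto
  have xV: "\<And>n. x n \<in> V n" using x unfolding FX_def by blast
  have succ: "\<And>n. \<exists>w. (x n, w) \<in> E n" using F_succ[OF F] xV by blast
  define y where "y m = proj Psi m (N m - m) (SOME w. (x (N m), w) \<in> E (N m))" for m
  have key: "proj Psi m (n - m) w = y m" if "n \<ge> N m" "(x n, w) \<in> E n" for m n w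
  proof -
    define w' where "w' = proj Psi (N m) (n - N m) w"
    have "(proj Psi (N m) (n - N m) (x n), w') \<in> E (N m)"
      unfolding w'_def using proj_E[OF F, of "x n" w "N m" "n - N m"] that by simp
    hence e1: "(x (N m), w') \<in> E (N m)" using proj_FX'[OF x, of "N m" n] that by simp
    have eq0: "n - m = (N m - m) + (n - N m)" using that N(1)[of m] by simp
    have eq1: "m + (N m - m) = N m" using N(1)[of m] by simp
    have eq: "proj Psi m (n - m) w = proj Psi m (N m - m) w'"
      unfolding w'_def eq0 using proj_add[of Psi m "N m - m" "n - N m" w] unfolding eq1 .
    have e2: "(x (N m), SOME w. (x (N m), w) \<in> E (N m)) \<in> E (N m)"
      using succ by (metis someI_ex)
    show ?thesis unfolding eq y_def
      by (rule card1_eq[OF N(2)[rule_format, OF xV]]) (use e1 e2 in auto)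
  qed
  have yE: "(x m, y m) \<in> E m" for m
  proof -
    obtain w where w: "(x (N m), w) \<in> E (N m)" using succ by blast
    have "(proj Psi m (N m - m) (x (N m)), proj Psi m (N m - m) w) \<in> E m"
      using proj_E[OF F, of "x (N m)" w m "N m - m"] w N(1)[of m] by simp
    then show ?thesis using key[of m "N m" w] w proj_FX'[OF x, of m "N m"] N(1)[of m] by simp
  qed
  have yV: "y m \<in> V m" for m
    using yE[of m] F_fin[OF F] by blast
  have ycons: "y m = Psi m (y (Suc m))" for m
  proof -
    define n where "n = max (N m) (N (Suc m))"
    obtain w where w: "(x n, w) \<in> E n" using succ by blast
    have n1: "n \<ge> N m" "n \<ge> N (Suc m)" "n > m" using N(1)[of m] unfolding n_def by auto
    have "y m = proj Psi m (n - m) w" using key[OF n1(1) w] by simp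
    also have "n - m = 1 + (n - Suc m)" using n1 N(1)[of "Suc m"] by simp
    also have "proj Psi m (1 + (n - Suc m)) w = Psi m (proj Psi (Suc m) (n - Suc m) w)"
      using proj_add[of Psi m 1 "n - Suc m" w] by simp
    also have "proj Psi (Suc m) (n - Suc m) w = y (Suc m)" using key[OF n1(2) w] by simp
    finally show ?thesis .
  qed
  have "y \<in> FX V Psi" unfolding FX_def using yV ycons by blast
  then show ?thesis using yE by blast
qed



lemma HX_prop:
  assumes F: "F_system V E Psi phiL phiU" and x: "x \<in> FX V Psi"
  shows "HX V E Psi x \<in> FX V Psi \<and> (\<forall>n. (x n, HX V E Psi x n) \<in> E n)"
proof -
  have ii: "\<forall>m. \<exists>n>m. \<forall>g\<in>V n. card {proj Psi m (n - m) g' | g'. (g, g') \<in> E n} = 1"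
    using F_ii[OF F] .
  have xV: "\<And>n. x n \<in> V n" using x unfolding FX_def by blast
  obtain y where y: "y \<in> FX V Psi \<and> (\<forall>n. (x n, y n) \<in> E n)" using HX_exists[OF F x] by blast
  have uniq: "y' = y" if y': "y' \<in> FX V Psi \<and> (\<forall>n. (x n, y' n) \<in> E n)" for y'
  proof
    fix m
    obtain n where n: "n > m" "\<forall>g\<in>V n. card {proj Psi m (n - m) g' | g'. (g, g') \<in> E n} = 1"
      using ii[rule_format, of m] by blast
    have c: "card {proj Psi m (n - m) g' | g'. (x n, g') \<in> E n} = 1" using n(2)[rule_format, OF xV] .
    have "y' \<in> FX V Psi" "y \<in> FX V Psi" "(x n, y' n) \<in> E n" "(x n, y n) \<in> E n" using y y' by blast+
    from HX_unique[OF F this(1) this(2) n(1) c this(3) this(4)] show "y' m = y m" .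
  qed
  have "HX V E Psi x = y" unfolding HX_def
    by (rule the_equality[where P="\<lambda>y. y \<in> FX V Psi \<and> (\<forall>n. (x n, y n) \<in> E n)", OF y uniq])
  then show ?thesis using y by (simp only: simp_thms)
qed

lemma HX_local:
  assumes F: "F_system V E Psi phiL phiU" and x: "x \<in> FX V Psi" and x': "x' \<in> FX V Psi"
    and m: "m < n" and c: "\<forall>g\<in>V n. card {proj Psi m (n - m) g' | g'. (g, g') \<in> E n} = 1"
    and eq: "x n = x' n"
  shows "HX V E Psi x m = HX V E Psi x' m"
proof -
  have xV: "x n \<in> V n" using x unfolding FX_def by blast
  have c1: "card {proj Psi m (n - m) g' | g'. (x n, g') \<in> E n} = 1" using c[rule_format, OF xV] .
  have h1: "HX V E Psi x \<in> FX V Psi" "(x n, HX V E Psi x n) \<in> E n" using HX_prop[OF F x] by blast+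
  have h2: "HX V E Psi x' \<in> FX V Psi" "(x n, HX V E Psi x' n) \<in> E n" using HX_prop[OF F x'] unfolding eq by blast+
  show ?thesis using HX_unique[OF F h1(1) h2(1) m c1 h1(2) h2(2)] .
qed



lemma series_conv:
  fixes a g :: "nat \<Rightarrow> real"
  assumes g: "summable g" and d: "\<And>n. \<bar>a (Suc n) - a n\<bar> \<le> g n"
  shows "convergent a \<and> (\<forall>n. \<bar>a n - lim a\<bar> \<le> (\<Sum>k. g (k + n)))"
proof -
  define D where "D n = a (Suc n) - a n" for n
  have dD: "norm (D n) \<le> g n" for n using d[of n] unfolding D_def by simp
  have sD: "summable D" by (rule summable_comparison_test[OF _ g]) (use dD in blast)
  have an: "a n = a 0 + (\<Sum>k<n. D k)" for n
    unfolding D_def using sum_lessThan_telescope[of a n] by simp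
  have "(\<lambda>n. a 0 + (\<Sum>k<n. D k)) \<longlonglongrightarrow> a 0 + suminf D"
    by (intro tendsto_add tendsto_const summable_LIMSEQ[OF sD])
  hence lim: "a \<longlonglongrightarrow> a 0 + suminf D" by (simp only: an[symmetric])
  hence la: "lim a = a 0 + suminf D" by (rule limI)
  have "\<bar>a n - lim a\<bar> \<le> (\<Sum>k. g (k + n))" for n
  proof -
    have gn: "summable (\<lambda>k. g (k + n))" using summable_ignore_initial_segment[OF g, of n] .
    have dn: "norm (D (k + n)) \<le> g (k + n)" for k using dD .
    have sDn: "summable (\<lambda>k. norm (D (k + n)))"
      by (rule summable_comparison_test[OF _ gn]) (use dn in simp)
    have "suminf D = (\<Sum>k. D (k + n)) + (\<Sum>i<n. D i)"
      using suminf_split_initial_segment[OF sD, of n] .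
    hence "a n - lim a = - (\<Sum>k. D (k + n))"
      using an[of n] la by simp
    hence "\<bar>a n - lim a\<bar> = norm (\<Sum>k. D (k + n))" by simp
    also have "\<dots> \<le> (\<Sum>k. norm (D (k + n)))"
      by (rule summable_norm[OF sDn])
    also have "\<dots> \<le> (\<Sum>k. g (k + n))"
      by (rule suminf_le[OF dn sDn gn])
    finally show ?thesis .
  qed
  then show ?thesis using lim convergent_def by blast
qed



lemma finE: "F_system V E Psi phiL phiU \<Longrightarrow> finite (E k)"
  using F_fin[of V E Psi phiL phiU] by (meson finite_SigmaI finite_subset)

lemma fin_pairs:
  assumes "finite S"
  shows "finite {f a b | a b. (a, b) \<in> S \<and> Q a b}"
proof -
  have "{f a b | a b. (a, b) \<in> S \<and> Q a b} \<subseteq> (\<lambda>p. f (fst p) (snd p)) ` S"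
  proof
    fix z assume "z \<in> {f a b | a b. (a, b) \<in> S \<and> Q a b}"
    then obtain a b where "z = f a b" "(a, b) \<in> S" by blast
    then show "z \<in> (\<lambda>p. f (fst p) (snd p)) ` S" by force
  qed
  then show ?thesis using assms finite_imageI finite_subset by blast
qed

lemma Gamma_bound:
  assumes F: "F_system V E Psi phiL phiU" and uv: "(u, v) \<in> E n"
    and e: "(u', v') \<in> E (Suc n)" and pu: "Psi n u' = u" and pv: "Psi n v' = v"
  shows "\<bar>s_n phiU n u v - s_n phiU (Suc n) u' v'\<bar> \<le> Gamma E Psi phiU n
       \<and> \<bar>s_n phiU n v u - s_n phiU (Suc n) v' u'\<bar> \<le> Gamma E Psi phiU n"
proof -
  let ?A = "{\<bar>s_n phiU n v u - s_n phiU (Suc n) v' u'\<bar> | u' v'.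
         (u', v') \<in> E (Suc n) \<and> Psi n u' = u \<and> Psi n v' = v}"
  let ?B = "{\<bar>s_n phiU n u v - s_n phiU (Suc n) u' v'\<bar> | u' v'.
         (u', v') \<in> E (Suc n) \<and> Psi n u' = u \<and> Psi n v' = v}"
  have fA: "finite ?A" by (rule fin_pairs[OF finE[OF F]])
  have fB: "finite ?B" by (rule fin_pairs[OF finE[OF F]])
  have fin: "finite (insert 0 (?A \<union> ?B))" using fA fB by blast
  have m1: "\<bar>s_n phiU n u v - s_n phiU (Suc n) u' v'\<bar> \<in> insert 0 (?A \<union> ?B)"
    using e pu pv by blast
  have m2: "\<bar>s_n phiU n v u - s_n phiU (Suc n) v' u'\<bar> \<in> insert 0 (?A \<union> ?B)"
    using e pu pv by blast
  have g1: "\<bar>s_n phiU n u v - s_n phiU (Suc n) u' v'\<bar> \<le> Gamma_edge E Psi phiU n u v"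
    unfolding Gamma_edge_def using Max_ge[OF fin m1] .
  have g2: "\<bar>s_n phiU n v u - s_n phiU (Suc n) v' u'\<bar> \<le> Gamma_edge E Psi phiU n u v"
    unfolding Gamma_edge_def using Max_ge[OF fin m2] .
  have fC: "finite {Gamma_edge E Psi phiU n u v | u v. (u, v) \<in> E n \<and> True}"
    by (rule fin_pairs[OF finE[OF F]])
  have fC': "finite (insert 0 {Gamma_edge E Psi phiU n u v | u v. (u, v) \<in> E n})"
    using fC by simp
  have mC: "Gamma_edge E Psi phiU n u v \<in> insert 0 {Gamma_edge E Psi phiU n u v | u v. (u, v) \<in> E n}"
    using uv by blast
  have "Gamma_edge E Psi phiU n u v \<le> Gamma E Psi phiU n"
    unfolding Gamma_def using Max_ge[OF fC' mC] .
  then show ?thesis using g1 g2 by linarith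
qed

lemma Gamma_nonneg:
  assumes F: "F_system V E Psi phiL phiU"
  shows "0 \<le> Gamma E Psi phiU n"
proof -
  have fC: "finite {Gamma_edge E Psi phiU n u v | u v. (u, v) \<in> E n \<and> True}"
    by (rule fin_pairs[OF finE[OF F]])
  have fC': "finite (insert 0 {Gamma_edge E Psi phiU n u v | u v. (u, v) \<in> E n})"
    using fC by simp
  show ?thesis unfolding Gamma_def by (rule Max_ge[OF fC']) simp
qed




lemma FX_V: "x \<in> FX V Psi \<Longrightarrow> x n \<in> V n"
  unfolding FX_def by blast

lemma FX_c: "x \<in> FX V Psi \<Longrightarrow> Psi n (x (Suc n)) = x n"
  unfolding FX_def by (metis (mono_tags, lifting) mem_Collect_eq)

lemma topspace_FX: "topspace (FX_top V Psi) = FX V Psi"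
proof -
  have "FX V Psi \<subseteq> (\<Pi>\<^sub>E n\<in>UNIV. V n)"
    unfolding PiE_UNIV_domain using FX_V by blast
  then show ?thesis unfolding FX_top_def by auto
qed

lemma cyl_open:
  "openin (FX_top V Psi) {x \<in> topspace (FX_top V Psi). x N \<in> {c}}" if "c \<in> V N"
proof -
  have "continuous_map (FX_top V Psi) (discrete_topology (V N)) (\<lambda>x. x N)"
    unfolding FX_top_def
    by (rule continuous_map_from_subtopology) (rule continuous_map_product_projection, simp)
  moreover have "openin (discrete_topology (V N)) {c}" using that by simp
  ultimately show ?thesis by (rule openin_continuous_map_preimage)
qed

theorem lemma5p3:
  fixes V :: "nat \<Rightarrow> 'v set" and E :: "nat \<Rightarrow> ('v \<times> 'v) set"
    and Psi :: "nat \<Rightarrow> 'v \<Rightarrow> 'v" and phiL phiU :: "nat \<Rightarrow> 'v \<Rightarrow> real"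
    and s :: "(nat \<Rightarrow> 'v) \<Rightarrow> real"
  assumes "F_system V E Psi phiL phiU"
    and "\<forall>n. \<forall>v\<in>V n. phiU n v > 0"
    and "Condition_Gamma E Psi phiU"
    and "s = (\<lambda>x. lim (\<lambda>n. s_n phiU n (x n) (HX V E Psi x n)))"
  shows "(\<forall>x\<in>FX V Psi. (\<lambda>n. s_n phiU n (x n) (HX V E Psi x n)) \<longlonglongrightarrow> s x)
    \<and> continuous_map (FX_top V Psi) euclideanreal s
    \<and> (\<forall>x\<in>FX V Psi. s x > 0)
    \<and> (\<forall>x\<in>FX V Psi. phiU_lim phiU x \<noteq> 0 \<longrightarrow>
          s x = phiU_lim phiU (HX V E Psi x) / phiU_lim phiU x)"
proof -
  note F = assms(1)
  have pos: "\<And>n v. v \<in> V n \<Longrightarrow> phiU n v > 0" using assms(2) by blast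
  have sG: "summable (Gamma E Psi phiU)" using assms(3) unfolding Condition_Gamma_def by blast
  define H where "H = HX V E Psi"
  define a where "a x n = s_n phiU n (x n) (H x n)" for x n
  define b where "b x n = s_n phiU n (H x n) (x n)" for x n
  have sx: "s x = lim (a x)" for x unfolding assms(4) a_def H_def by simp
  have HF: "H x \<in> FX V Psi" "(x n, H x n) \<in> E n" if "x \<in> FX V Psi" for x n
    using HX_prop[OF F that] unfolding H_def by blast+
  have step: "\<bar>a x (Suc n) - a x n\<bar> \<le> Gamma E Psi phiU n \<and> \<bar>b x (Suc n) - b x n\<bar> \<le> Gamma E Psi phiU n"
    if x: "x \<in> FX V Psi" for x n
  proof -
    have "\<bar>s_n phiU n (x n) (H x n) - s_n phiU (Suc n) (x (Suc n)) (H x (Suc n))\<bar> \<le> Gamma E Psi phiU n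
       \<and> \<bar>s_n phiU n (H x n) (x n) - s_n phiU (Suc n) (H x (Suc n)) (x (Suc n))\<bar> \<le> Gamma E Psi phiU n"
      by (rule Gamma_bound[OF F HF(2)[OF x] HF(2)[OF x] FX_c[OF x] FX_c[OF HF(1)[OF x]]])
    then show ?thesis unfolding a_def b_def by (simp add: abs_minus_commute)
  qed
  have conv: "convergent (a x) \<and> (\<forall>n. \<bar>a x n - s x\<bar> \<le> (\<Sum>k. Gamma E Psi phiU (k + n)))"
    if x: "x \<in> FX V Psi" for x
    using series_conv[OF sG, of "a x"] step[OF x] unfolding sx by blast
  have lima: "a x \<longlonglongrightarrow> s x" if x: "x \<in> FX V Psi" for x
    using conv[OF x] unfolding sx by (simp add: convergent_LIMSEQ_iff)
  have apos: "a x n > 0" "a x n * b x n = 1" if x: "x \<in> FX V Psi" for x n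
  proof -
    have p1: "phiU n (x n) > 0" using pos FX_V[OF x] by blast
    have p2: "phiU n (H x n) > 0" using pos FX_V[OF HF(1)[OF x]] by blast
    show "a x n > 0" "a x n * b x n = 1" unfolding a_def b_def s_n_def using p1 p2 by auto
  qed
  have spos: "s x > 0" if x: "x \<in> FX V Psi" for x
  proof -
    have "convergent (b x)" using series_conv[OF sG, of "b x"] step[OF x] by blast
    then obtain B where B: "b x \<longlonglongrightarrow> B" by (auto simp: convergent_def)
    have L1: "(\<lambda>n. a x n * b x n) \<longlonglongrightarrow> s x * B" by (rule tendsto_mult[OF lima[OF x] B])
    have eqf: "(\<lambda>n. a x n * b x n) = (\<lambda>n. 1)" using apos[OF x] by auto
    have "(\<lambda>n. 1::real) \<longlonglongrightarrow> s x * B" using L1 unfolding eqf .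
    hence "s x * B = 1" by (rule LIMSEQ_unique[OF _ tendsto_const])
    hence "s x \<noteq> 0" by auto
    moreover have "s x \<ge> 0"
      by (rule LIMSEQ_le_const[OF lima[OF x]]) (use apos[OF x] less_imp_le in blast)
    ultimately show ?thesis by simp
  qed
  have cont: "continuous_map (FX_top V Psi) euclideanreal s"
    unfolding continuous_map
  proof (intro conjI allI impI)
    show "s ` topspace (FX_top V Psi) \<subseteq> topspace euclideanreal" by simp
  next
    fix U :: "real set" assume U: "openin euclideanreal U"
    show "openin (FX_top V Psi) {x \<in> topspace (FX_top V Psi). s x \<in> U}"
    proof (subst openin_subopen, intro ballI)
      fix x0 assume x0: "x0 \<in> {x \<in> topspace (FX_top V Psi). s x \<in> U}"
      hence x0X: "x0 \<in> FX V Psi" and sU: "s x0 \<in> U" using topspace_FX by blast+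
      obtain e where e: "e > 0" "ball (s x0) e \<subseteq> U"
        using U sU by (metis open_contains_ball open_openin)
      obtain m where m: "\<forall>n\<ge>m. norm (\<Sum>i. Gamma E Psi phiU (i + n)) < e / 2"
        using suminf_exist_split[OF _ sG, of "e / 2"] e(1) by auto
      obtain N where N: "N > m" "\<forall>g\<in>V N. card {proj Psi m (N - m) g' | g'. (g, g') \<in> E N} = 1"
        using F_ii[OF F] by blast
      define T where "T = {x \<in> topspace (FX_top V Psi). x N \<in> {x0 N}}"
      have "openin (FX_top V Psi) T" unfolding T_def by (rule cyl_open[OF FX_V[OF x0X]])
      moreover have "x0 \<in> T" unfolding T_def using x0 by blast
      moreover have "T \<subseteq> {x \<in> topspace (FX_top V Psi). s x \<in> U}"
      proof
        fix x assume xT: "x \<in> T"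
        hence xX: "x \<in> FX V Psi" and xN: "x N = x0 N" unfolding T_def topspace_FX by blast+
        have "x m = proj Psi m (N - m) (x N)" using proj_FX'[OF xX, of m N] N(1) by simp
        also have "\<dots> = proj Psi m (N - m) (x0 N)" unfolding xN ..
        also have "\<dots> = x0 m" using proj_FX'[OF x0X, of m N] N(1) by simp
        finally have e1: "x m = x0 m" .
        have e2: "H x m = H x0 m" unfolding H_def by (rule HX_local[OF F xX x0X N(1) N(2) xN])
        have am: "a x m = a x0 m" unfolding a_def e1 e2 ..
        have t: "(\<Sum>k. Gamma E Psi phiU (k + m)) < e / 2" using m by auto
        have "\<bar>a x m - s x\<bar> < e / 2" using conv[OF xX] t by (meson le_less_trans)
        moreover have "\<bar>a x0 m - s x0\<bar> < e / 2" using conv[OF x0X] t by (meson le_less_trans)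
        ultimately have "dist (s x0) (s x) < e" unfolding dist_real_def am by linarith
        hence "s x \<in> U" using e(2) by auto
        then show "x \<in> {x \<in> topspace (FX_top V Psi). s x \<in> U}" using xT unfolding T_def by blast
      qed
      ultimately show "\<exists>T. openin (FX_top V Psi) T \<and> x0 \<in> T \<and> T \<subseteq> {x \<in> topspace (FX_top V Psi). s x \<in> U}"
        by blast
    qed
  qed
  have plim: "(\<lambda>n. phiU n (x n)) \<longlonglongrightarrow> phiU_lim phiU x" if x: "x \<in> FX V Psi" for x
  proof -
    have "decseq (\<lambda>n. phiU n (x n))"
    proof (rule decseq_SucI)
      fix n
      have "phiU (Suc n) (x (Suc n)) \<le> phiU n (Psi n (x (Suc n)))"
        using F_mono[OF F] FX_V[OF x] by blast
      then show "phiU (Suc n) (x (Suc n)) \<le> phiU n (x n)" unfolding FX_c[OF x] .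
    qed
    moreover have "\<forall>i. 0 \<le> phiU i (x i)" using pos FX_V[OF x] less_imp_le by blast
    ultimately obtain L where L: "(\<lambda>n. phiU n (x n)) \<longlonglongrightarrow> L" by (rule decseq_convergent)
    have "phiU_lim phiU x = L" unfolding phiU_lim_def using L by (rule limI)
    then show ?thesis using L by simp
  qed
  have ratio: "s x = phiU_lim phiU (HX V E Psi x) / phiU_lim phiU x"
    if x: "x \<in> FX V Psi" and nz: "phiU_lim phiU x \<noteq> 0" for x
  proof -
    have "(\<lambda>n. phiU n (H x n) / phiU n (x n)) \<longlonglongrightarrow> phiU_lim phiU (H x) / phiU_lim phiU x"
      by (rule tendsto_divide[OF plim[OF HF(1)[OF x]] plim[OF x] nz])
    moreover have "a x = (\<lambda>n. phiU n (H x n) / phiU n (x n))" unfolding a_def s_n_def by simp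
    ultimately have "a x \<longlonglongrightarrow> phiU_lim phiU (H x) / phiU_lim phiU x" by simp
    then show ?thesis using LIMSEQ_unique lima[OF x] unfolding H_def by blast
  qed
  show ?thesis
    using lima spos cont ratio unfolding a_def H_def by blast
qed


end
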